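(* Let ${\rm PSL}_2(\mathbb Z)$ be presented by generators $\rho,\sigma$ with relations $\rho^3=1$, $\sigma^2=1$. Then ${\rm PSL}_2(\mathbb Z)$ acts on $\Delta$ as a group of automorphisms such that $\rho$ sends $A\mapsto B$, $B\mapsto C$, $C\mapsto A$, $\alpha\mapsto\beta$, $\beta\mapsto\gamma$, $\gamma\mapsto\alpha$, and $\sigma$ sends $A\mapsto B$, $B\mapsto A$, $C\mapsto C+\frac{AB-BA}{q-q^{-1}}$, $\alpha\mapsto\beta$, $\beta\mapsto\alpha$, $\gamma\mapsto\gamma$.
   Context: Let $\mathbb F$ be a field and fix a nonzero $q\in\mathbb F$ with $q^4\neq 1$. Algebras are associative with 1. The universal Askey--Wilson algebra $\Delta$ is the $\mathbb F$-algebra with generators $A,B,C$ subject to the relations that each of $A+\frac{qBC-q^{-1}CB}{q^2-q^{-2}}$, $B+\frac{qCA-q^{-1}AC}{q^2-q^{-2}}$, $C+\frac{qAB-q^{-1}BA}{q^2-q^{-2}}$ is central in $\Delta$. Let $\alpha,\beta,\gamma$ denote these three central elements (in this order) each multiplied by $q+q^{-1}$. *)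

theory Defs
  imports "HOL-Library.Poly_Mapping" "HOL-Algebra.QuotRing"
begin

text \<open>The free (noncommutative) associative unital algebra over a field on the
  three generators A, B, C: finitely supported functions from words in the
  generators to the field, with multiplication the convolution over
  concatenation of words.\<close>

datatype awgen = GA | GB | GC

datatype aw_word = AWWord "awgen list"

instantiation aw_word :: monoid_add
begin
definition zero_aw_word :: aw_word where "zero_aw_word = AWWord []"
fun plus_aw_word :: "aw_word \<Rightarrow> aw_word \<Rightarrow> aw_word" where
  "plus_aw_word (AWWord x) (AWWord y) = AWWord (x @ y)"
instance
proof
  fix a b c :: aw_word
  show "a + b + c = a + (b + c)" by (cases a; cases b; cases c) simp
  show "0 + a = a" by (cases a) (simp add: zero_aw_word_def)
  show "a + 0 = a" by (cases a) (simp add: zero_aw_word_def)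
qed
end

type_synonym 'a freealg = "aw_word \<Rightarrow>\<^sub>0 'a"

definition fa_const :: "'a::field \<Rightarrow> 'a freealg" where
  "fa_const c = Poly_Mapping.single 0 c"

definition fa_smult :: "'a::field \<Rightarrow> 'a freealg \<Rightarrow> 'a freealg" where
  "fa_smult c x = fa_const c * x"

definition fa_gen :: "awgen \<Rightarrow> 'a::field freealg" where
  "fa_gen g = Poly_Mapping.single (AWWord [g]) 1"

abbreviation fA :: "'a::field freealg" where "fA \<equiv> fa_gen GA"
abbreviation fB :: "'a::field freealg" where "fB \<equiv> fa_gen GB"
abbreviation fC :: "'a::field freealg" where "fC \<equiv> fa_gen GC"

definition free_ring :: "('a::field freealg) ring" where
  "free_ring = \<lparr>carrier = UNIV, mult = (*), one = 1, zero = 0, add = (+)\<rparr>"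

definition aw_central :: "'a::field \<Rightarrow> 'a freealg \<Rightarrow> 'a freealg \<Rightarrow> 'a freealg \<Rightarrow> 'a freealg" where
  "aw_central q x y z =
     x + fa_smult (1 / (q^2 - 1 / q^2)) (fa_smult q (y * z) - fa_smult (1 / q) (z * y))"

definition aw_alpha :: "'a::field \<Rightarrow> 'a freealg" where
  "aw_alpha q = fa_smult (q + 1 / q) (aw_central q fA fB fC)"
definition aw_beta :: "'a::field \<Rightarrow> 'a freealg" where
  "aw_beta q = fa_smult (q + 1 / q) (aw_central q fB fC fA)"
definition aw_gamma :: "'a::field \<Rightarrow> 'a freealg" where
  "aw_gamma q = fa_smult (q + 1 / q) (aw_central q fC fA fB)"

definition aw_rel :: "'a::field \<Rightarrow> 'a freealg set" where
  "aw_rel q = {c * y - y * c | c y. c \<in> {aw_central q fA fB fC, aw_central q fB fC fA,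
                                           aw_central q fC fA fB}}"

definition aw_ideal :: "'a::field \<Rightarrow> 'a freealg set" where
  "aw_ideal q = genideal free_ring (aw_rel q)"

definition UAW :: "'a::field \<Rightarrow> ('a freealg set) ring" where
  "UAW q = free_ring Quot aw_ideal q"

definition aw_cls :: "'a::field \<Rightarrow> 'a freealg \<Rightarrow> 'a freealg set" where
  "aw_cls q x = aw_ideal q +>\<^bsub>free_ring\<^esub> x"

definition aw_alg_aut :: "'a::field \<Rightarrow> ('a freealg set \<Rightarrow> 'a freealg set) \<Rightarrow> bool" where
  "aw_alg_aut q f \<longleftrightarrow> f \<in> ring_iso (UAW q) (UAW q) \<and>
     (\<forall>c. f (aw_cls q (fa_const c)) = aw_cls q (fa_const c))"

end

theory Submission
  imports Defs
begin


lemma pm_induct[case_names zero single add]: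
  assumes "P 0" "\<And>w c. P (Poly_Mapping.single w c)" "\<And>a b. P a \<Longrightarrow> P b \<Longrightarrow> P (a + b)"
  shows "P p"
proof (induction p rule: update_induct)
  case const show ?case by fact
next
  case (update f k v)
  have "Poly_Mapping.update k v f = f + Poly_Mapping.single k v"
    using update.hyps(1)
    by (intro poly_mapping_eqI) (auto simp: lookup_update lookup_add lookup_single in_keys_iff when_def)
  then show ?case using assms update by simp
qed

lemma fa_const_0[simp]: "fa_const 0 = 0" by (simp add: fa_const_def)
lemma fa_const_1[simp]: "fa_const 1 = 1" by (simp add: fa_const_def)
lemma fa_const_add: "fa_const (a + b) = fa_const a + fa_const b"
  by (simp add: fa_const_def single_add)
lemma fa_const_mult: "fa_const a * fa_const b = fa_const (a * b)"
  by (simp add: fa_const_def mult_single)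
lemma fa_const_central: "fa_const c * x = x * fa_const c"
proof (induction x rule: pm_induct)
  case zero then show ?case by simp
next
  case (single w d) then show ?case by (simp add: fa_const_def mult_single mult.commute)
next
  case (add a b) then show ?case by (simp add: distrib_left distrib_right)
qed

fun wd :: "(awgen \<Rightarrow> 'a::field freealg) \<Rightarrow> aw_word \<Rightarrow> 'a freealg" where
  "wd g (AWWord ws) = prod_list (map g ws)"

lemma wd_plus: "wd g (v + w) = wd g v * wd g w"
  by (cases v; cases w) simp
lemma wd_zero[simp]: "wd g 0 = 1"
  by (simp add: zero_aw_word_def)

definition fext :: "(awgen \<Rightarrow> 'a::field freealg) \<Rightarrow> 'a freealg \<Rightarrow> 'a freealg" where
  "fext g p = (\<Sum>w\<in>Poly_Mapping.keys p. fa_const (Poly_Mapping.lookup p w) * wd g w)"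

lemma fext_0[simp]: "fext g 0 = 0" by (simp add: fext_def)

lemma fext_single: "fext g (Poly_Mapping.single w c) = fa_const c * wd g w"
  by (simp add: fext_def)

lemma fext_add: "fext g (a + b) = fext g a + fext g b"
proof -
  let ?f = "\<lambda>p w. fa_const (Poly_Mapping.lookup p w) * wd g w"
  have *: "(\<Sum>w\<in>Poly_Mapping.keys a. ?f a w) = (\<Sum>w\<in>Poly_Mapping.keys a \<union> Poly_Mapping.keys b. ?f a w)"
          "(\<Sum>w\<in>Poly_Mapping.keys b. ?f b w) = (\<Sum>w\<in>Poly_Mapping.keys a \<union> Poly_Mapping.keys b. ?f b w)"
    by (auto simp: in_keys_iff intro: sum.mono_neutral_cong_left)
  have "fext g (a+b) = (\<Sum>w\<in>Poly_Mapping.keys (a + b). ?f a w + ?f b w)"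
    by (auto simp: fext_def lookup_add fa_const_add distrib_right)
  also have "\<dots> = (\<Sum>w\<in>Poly_Mapping.keys a \<union> Poly_Mapping.keys b. ?f a w + ?f b w)"
  proof (rule sum.mono_neutral_cong_left)
    show "\<forall>i\<in>Poly_Mapping.keys a \<union> Poly_Mapping.keys b - Poly_Mapping.keys (a + b). ?f a i + ?f b i = 0"
      by (auto simp: in_keys_iff lookup_add fa_const_add[symmetric] distrib_right[symmetric])
  qed (auto simp: keys_add)
  also have "\<dots> = fext g a + fext g b"
    by (simp add: * sum.distrib fext_def)
  finally show ?thesis .
qed

lemma fext_minus: "fext g (- a) = - fext g a"
  using fext_add[of g "-a" a] by (simp add: eq_neg_iff_add_eq_0)

lemma fext_diff: "fext g (a - b) = fext g a - fext g b"
  using fext_add[of g a "-b"] fext_minus[of g b] by simp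

lemma fext_mult: "fext g (p * r) = fext g p * fext g r"
proof (induction p rule: pm_induct)
  case zero then show ?case by simp
next
  case (add a b) then show ?case by (simp add: distrib_right fext_add)
next
  case (single v a)
  show ?case
  proof (induction r rule: pm_induct)
    case zero then show ?case by simp
  next
    case (add c d) then show ?case by (simp add: distrib_left fext_add)
  next
    case (single w b)
    have c: "wd g v * fa_const b = fa_const b * wd g v" by (rule fa_const_central[symmetric])
    have "fext g (Poly_Mapping.single v a * Poly_Mapping.single w b) = fa_const (a * b) * (wd g v * wd g w)"
      by (simp add: mult_single fext_single wd_plus)
    also have "\<dots> = fa_const a * (fa_const b * wd g v) * wd g w"
      by (simp add: mult.assoc fa_const_mult[symmetric])
    also have "\<dots> = fa_const a * wd g v * (fa_const b * wd g w)"
      by (simp add: c[symmetric] mult.assoc)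
    finally show ?case by (simp add: fext_single)
  qed
qed

lemma fext_const[simp]: "fext g (fa_const c) = fa_const c"
  by (simp add: fa_const_def fext_single)

lemma fext_one[simp]: "fext g 1 = 1"
  using fext_const[of g 1] by simp

lemma fext_gen[simp]: "fext g (fa_gen l) = g l"
  by (simp add: fa_gen_def fext_single)

lemma fext_smult: "fext g (fa_smult c x) = fa_smult c (fext g x)"
  by (simp add: fa_smult_def fext_mult)

lemma fext_wd: "fext g (wd h w) = wd (\<lambda>l. fext g (h l)) w"
proof (cases w)
  case (AWWord ws) then show ?thesis
    by (induction ws arbitrary: w) (simp_all add: fext_mult)
qed

lemma fext_comp: "fext g (fext h p) = fext (\<lambda>l. fext g (h l)) p"
proof (induction p rule: pm_induct)
  case zero then show ?case by simp
next
  case (add a b) then show ?case by (simp add: fext_add)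
next
  case (single w c) then show ?case by (simp add: fext_single fext_mult fext_wd)
qed

lemma wd_gen: "wd fa_gen w = Poly_Mapping.single w 1"
proof (cases w)
  case (AWWord ws) then show ?thesis
  proof (induction ws arbitrary: w)
    case Nil then show ?case by (simp add: zero_aw_word_def[symmetric])
  next
    case (Cons l ws) then show ?case by (simp add: fa_gen_def mult_single)
  qed
qed

lemma fext_id: "fext fa_gen p = p"
proof (induction p rule: pm_induct)
  case zero then show ?case by simp
next
  case (add a b) then show ?case by (simp add: fext_add)
next
  case (single w c) then show ?case by (simp add: fext_single wd_gen fa_const_def mult_single)
qed



lemma free_ring_ring: "ring (free_ring :: 'a::field freealg ring)"
proof -
  have "\<exists>y. x + y = 0" for x :: "'a freealg"
    using add.right_inverse by blast
  thus ?thesis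
    unfolding free_ring_def by unfold_locales (auto simp: algebra_simps Units_def)
qed

lemma free_ring_simps[simp]:
  "carrier free_ring = UNIV" "x \<oplus>\<^bsub>free_ring\<^esub> y = x + y" "x \<otimes>\<^bsub>free_ring\<^esub> y = x * y"
  "\<one>\<^bsub>free_ring\<^esub> = 1" "\<zero>\<^bsub>free_ring\<^esub> = 0"
  by (simp_all add: free_ring_def)

lemma free_ring_neg[simp]: "\<ominus>\<^bsub>free_ring\<^esub> (x :: 'a::field freealg) = - x"
proof -
  interpret ring "free_ring :: 'a freealg ring" by (rule free_ring_ring)
  show ?thesis by (rule minus_equality) simp_all
qed

lemma aw_ideal_ideal: "ideal (aw_ideal q) free_ring"
  unfolding aw_ideal_def by (rule ring.genideal_ideal[OF free_ring_ring]) simp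

lemma I_add: "x \<in> aw_ideal q \<Longrightarrow> y \<in> aw_ideal q \<Longrightarrow> x + y \<in> aw_ideal q"
proof -
  interpret ideal "aw_ideal q" free_ring by (rule aw_ideal_ideal)
  show "x \<in> aw_ideal q \<Longrightarrow> y \<in> aw_ideal q \<Longrightarrow> x + y \<in> aw_ideal q"
    using additive_subgroup.a_closed[OF ideal.axioms(1)[OF aw_ideal_ideal], of x q y] by simp
qed

lemma I_neg: "x \<in> aw_ideal q \<Longrightarrow> - x \<in> aw_ideal q"
proof -
  interpret ideal "aw_ideal q" free_ring by (rule aw_ideal_ideal)
  show "x \<in> aw_ideal q \<Longrightarrow> - x \<in> aw_ideal q"
    using additive_subgroup.a_inv_closed[OF ideal.axioms(1)[OF aw_ideal_ideal], of x q] by simp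
qed

lemma I_zero: "0 \<in> aw_ideal q"
proof -
  interpret ideal "aw_ideal q" free_ring by (rule aw_ideal_ideal)
  show ?thesis
    using additive_subgroup.zero_closed[OF ideal.axioms(1)[OF aw_ideal_ideal]] by simp
qed

lemma I_diff: "x \<in> aw_ideal q \<Longrightarrow> y \<in> aw_ideal q \<Longrightarrow> x - y \<in> aw_ideal q"
  using I_add[of x q "-y"] I_neg[of y q] by simp

lemma I_lmul: "x \<in> aw_ideal q \<Longrightarrow> a * x \<in> aw_ideal q"
proof -
  interpret ideal "aw_ideal q" free_ring by (rule aw_ideal_ideal)
  show "x \<in> aw_ideal q \<Longrightarrow> a * x \<in> aw_ideal q"
    using I_l_closed[of x a] by simp
qed

lemma I_rmul: "x \<in> aw_ideal q \<Longrightarrow> x * a \<in> aw_ideal q"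
proof -
  interpret ideal "aw_ideal q" free_ring by (rule aw_ideal_ideal)
  show "x \<in> aw_ideal q \<Longrightarrow> x * a \<in> aw_ideal q"
    using I_r_closed[of x a] by simp
qed

lemma I_smult: "x \<in> aw_ideal q \<Longrightarrow> fa_smult c x \<in> aw_ideal q"
  unfolding fa_smult_def by (rule I_lmul)

lemma I_rel: "x \<in> aw_rel q \<Longrightarrow> x \<in> aw_ideal q"
  unfolding aw_ideal_def using ring.genideal_self[OF free_ring_ring, of "aw_rel q"] by auto

lemma cls_set: "aw_cls q x = (\<Union>h\<in>aw_ideal q. {h + x})"
  by (simp add: aw_cls_def a_r_coset_def r_coset_def)

lemma cls_mem: "y \<in> aw_cls q x \<longleftrightarrow> y - x \<in> aw_ideal q"
proof
  assume "y \<in> aw_cls q x"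
  then obtain h where "h \<in> aw_ideal q" "y = h + x" by (auto simp: cls_set)
  then show "y - x \<in> aw_ideal q" by simp
next
  assume "y - x \<in> aw_ideal q"
  moreover have "y = (y - x) + x" by simp
  ultimately show "y \<in> aw_cls q x" unfolding cls_set by blast
qed

lemma cls_eq: "aw_cls q x = aw_cls q y \<longleftrightarrow> x - y \<in> aw_ideal q"
proof
  assume e: "aw_cls q x = aw_cls q y"
  have "x - x \<in> aw_ideal q" using I_zero by simp
  then have "x \<in> aw_cls q x" by (simp only: cls_mem)
  then have "x \<in> aw_cls q y" using e by simp
  then show "x - y \<in> aw_ideal q" by (simp only: cls_mem)
next
  assume xy: "x - y \<in> aw_ideal q"
  have "z \<in> aw_cls q x \<longleftrightarrow> z \<in> aw_cls q y" for z
  proof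
    assume "z \<in> aw_cls q x"
    then have "z - x \<in> aw_ideal q" by (simp only: cls_mem)
    from I_add[OF this xy] have "z - y \<in> aw_ideal q" by simp
    then show "z \<in> aw_cls q y" by (simp only: cls_mem)
  next
    assume "z \<in> aw_cls q y"
    then have "z - y \<in> aw_ideal q" by (simp only: cls_mem)
    from I_diff[OF this xy] have "z - x \<in> aw_ideal q" by simp
    then show "z \<in> aw_cls q x" by (simp only: cls_mem)
  qed
  then show "aw_cls q x = aw_cls q y" by blast
qed

lemma UAW_carrier: "carrier (UAW q) = range (aw_cls q)"
  by (auto simp: UAW_def FactRing_def A_RCOSETS_def' aw_cls_def)

lemma UAW_mult: "aw_cls q x \<otimes>\<^bsub>UAW q\<^esub> aw_cls q y = aw_cls q (x * y)"
  using ideal.rcoset_mult_add[OF aw_ideal_ideal, of x y q]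
  by (simp add: UAW_def FactRing_def aw_cls_def)

lemma UAW_add: "aw_cls q x \<oplus>\<^bsub>UAW q\<^esub> aw_cls q y = aw_cls q (x + y)"
  using ideal.a_rcos_sum[OF aw_ideal_ideal, of x y q]
  by (simp add: UAW_def FactRing_def aw_cls_def)

lemma UAW_one: "\<one>\<^bsub>UAW q\<^esub> = aw_cls q 1"
  by (simp add: UAW_def FactRing_def aw_cls_def)

definition is_hom :: "('a::field freealg \<Rightarrow> 'a freealg) \<Rightarrow> bool" where
  "is_hom f \<longleftrightarrow> (\<forall>x y. f (x + y) = f x + f y) \<and> (\<forall>x y. f (x * y) = f x * f y) \<and> f 1 = 1"

lemma is_hom_diff: "is_hom f \<Longrightarrow> f (x - y) = f x - f y"
  unfolding is_hom_def by (metis add_diff_cancel diff_add_cancel)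

lemma respects_ideal:
  assumes h: "is_hom f" and rel: "\<And>r. r \<in> aw_rel q \<Longrightarrow> f r \<in> aw_ideal q"
    and x: "x \<in> aw_ideal q"
  shows "f x \<in> aw_ideal q"
proof -
  let ?J = "{x. f x \<in> aw_ideal q}"
  have f0: "f 0 = 0" using is_hom_diff[OF h, of 0 0] by simp
  have "ideal ?J free_ring"
  proof (rule idealI[OF free_ring_ring])
    show "subgroup ?J (add_monoid free_ring)"
    proof (rule subgroup.intro)
      show "?J \<subseteq> carrier (add_monoid free_ring)" by simp
      show "\<And>x y. x \<in> ?J \<Longrightarrow> y \<in> ?J \<Longrightarrow> x \<otimes>\<^bsub>add_monoid free_ring\<^esub> y \<in> ?J"
        using h by (simp add: is_hom_def I_add)
      show "\<one>\<^bsub>add_monoid free_ring\<^esub> \<in> ?J" by (simp add: f0 I_zero)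
      show "inv\<^bsub>add_monoid free_ring\<^esub> x \<in> ?J" if "x \<in> ?J" for x
      proof -
        have "inv\<^bsub>add_monoid free_ring\<^esub> x = - x" using free_ring_neg[of x] unfolding a_inv_def .
        then show ?thesis using that is_hom_diff[OF h, of 0 x] f0 by (simp add: I_neg)
      qed
    qed
    show "\<And>a x. a \<in> ?J \<Longrightarrow> x \<in> carrier free_ring \<Longrightarrow> x \<otimes>\<^bsub>free_ring\<^esub> a \<in> ?J"
      using h by (simp add: is_hom_def I_lmul)
    show "\<And>a x. a \<in> ?J \<Longrightarrow> x \<in> carrier free_ring \<Longrightarrow> a \<otimes>\<^bsub>free_ring\<^esub> x \<in> ?J"
      using h by (simp add: is_hom_def I_rmul)
  qed
  moreover have "aw_rel q \<subseteq> ?J" using rel by auto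
  ultimately have "aw_ideal q \<subseteq> ?J"
    unfolding aw_ideal_def by (rule ring.genideal_minimal[OF free_ring_ring])
  with x show ?thesis by auto
qed

definition indF :: "'a::field \<Rightarrow> ('a freealg \<Rightarrow> 'a freealg) \<Rightarrow> 'a freealg set \<Rightarrow> 'a freealg set" where
  "indF q f X = aw_cls q (f (SOME x. X = aw_cls q x))"

definition good :: "'a::field \<Rightarrow> ('a freealg \<Rightarrow> 'a freealg) \<Rightarrow> bool" where
  "good q f \<longleftrightarrow> is_hom f \<and> (\<forall>r \<in> aw_rel q. f r \<in> aw_ideal q)"

lemma indF_cls:
  assumes "good q f"
  shows "indF q f (aw_cls q x) = aw_cls q (f x)"
proof -
  define y where "y = (SOME y. aw_cls q x = aw_cls q y)"
  have "aw_cls q x = aw_cls q y" unfolding y_def by (rule someI[of _ x]) simp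
  then have "x - y \<in> aw_ideal q" by (simp add: cls_eq)
  then have "f (x - y) \<in> aw_ideal q"
    using assms respects_ideal unfolding good_def by blast
  then have "aw_cls q (f y) = aw_cls q (f x)"
    using assms is_hom_diff[of f x y] unfolding good_def
    by (simp add: cls_eq) (metis I_neg minus_diff_eq)
  then show ?thesis by (simp add: indF_def y_def)
qed

lemma indF_hom:
  assumes "good q f"
  shows "indF q f \<in> ring_hom (UAW q) (UAW q)"
proof (rule ring_hom_memI)
  have h: "is_hom f" using assms by (simp add: good_def)
  show "\<And>x. x \<in> carrier (UAW q) \<Longrightarrow> indF q f x \<in> carrier (UAW q)"
    by (auto simp: UAW_carrier indF_cls[OF assms])
  show "\<And>x y. x \<in> carrier (UAW q) \<Longrightarrow> y \<in> carrier (UAW q) \<Longrightarrow>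
        indF q f (x \<otimes>\<^bsub>UAW q\<^esub> y) = indF q f x \<otimes>\<^bsub>UAW q\<^esub> indF q f y"
    using h by (auto simp: UAW_carrier indF_cls[OF assms] UAW_mult is_hom_def)
  show "\<And>x y. x \<in> carrier (UAW q) \<Longrightarrow> y \<in> carrier (UAW q) \<Longrightarrow>
        indF q f (x \<oplus>\<^bsub>UAW q\<^esub> y) = indF q f x \<oplus>\<^bsub>UAW q\<^esub> indF q f y"
    using h by (auto simp: UAW_carrier indF_cls[OF assms] UAW_add is_hom_def)
  show "indF q f \<one>\<^bsub>UAW q\<^esub> = \<one>\<^bsub>UAW q\<^esub>"
    using h by (simp add: UAW_one indF_cls[OF assms] is_hom_def)
qed

lemma indF_aut:
  assumes f: "good q f" and g: "good q g" and fg: "\<And>x. f (g x) = x" and gf: "\<And>x. g (f x) = x"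
    and c: "\<And>c. f (fa_const c) = fa_const c"
  shows "aw_alg_aut q (indF q f)"
  unfolding aw_alg_aut_def ring_iso_def
proof (intro conjI CollectI allI)
  show "indF q f \<in> ring_hom (UAW q) (UAW q)" by (rule indF_hom[OF f])
  show "bij_betw (indF q f) (carrier (UAW q)) (carrier (UAW q))"
    by (rule bij_betw_byWitness[where f'="indF q g"])
       (auto simp: UAW_carrier indF_cls[OF f] indF_cls[OF g] fg gf)
  show "\<And>c. indF q f (aw_cls q (fa_const c)) = aw_cls q (fa_const c)"
    by (simp add: indF_cls[OF f] c)
qed



lemma word_cases:
  assumes "P (AWWord [])"
    and "P (AWWord [GA])"
    and "P (AWWord [GB])"
    and "P (AWWord [GC])"
    and "P (AWWord [GA,GA])"
    and "P (AWWord [GA,GB])"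
    and "P (AWWord [GA,GC])"
    and "P (AWWord [GB,GA])"
    and "P (AWWord [GB,GB])"
    and "P (AWWord [GB,GC])"
    and "P (AWWord [GC,GA])"
    and "P (AWWord [GC,GB])"
    and "P (AWWord [GC,GC])"
    and "P (AWWord [GA,GA,GA])"
    and "P (AWWord [GA,GA,GB])"
    and "P (AWWord [GA,GA,GC])"
    and "P (AWWord [GA,GB,GA])"
    and "P (AWWord [GA,GB,GB])"
    and "P (AWWord [GA,GB,GC])"
    and "P (AWWord [GA,GC,GA])"
    and "P (AWWord [GA,GC,GB])"
    and "P (AWWord [GA,GC,GC])"
    and "P (AWWord [GB,GA,GA])"
    and "P (AWWord [GB,GA,GB])"
    and "P (AWWord [GB,GA,GC])"
    and "P (AWWord [GB,GB,GA])"
    and "P (AWWord [GB,GB,GB])"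
    and "P (AWWord [GB,GB,GC])"
    and "P (AWWord [GB,GC,GA])"
    and "P (AWWord [GB,GC,GB])"
    and "P (AWWord [GB,GC,GC])"
    and "P (AWWord [GC,GA,GA])"
    and "P (AWWord [GC,GA,GB])"
    and "P (AWWord [GC,GA,GC])"
    and "P (AWWord [GC,GB,GA])"
    and "P (AWWord [GC,GB,GB])"
    and "P (AWWord [GC,GB,GC])"
    and "P (AWWord [GC,GC,GA])"
    and "P (AWWord [GC,GC,GB])"
    and "P (AWWord [GC,GC,GC])"
    and "\<And>a b c d r. P (AWWord (a#b#c#d#r))"
  shows "P w"
proof -
  obtain ws where w: "w = AWWord ws" by (cases w)
  have ag: "\<And>x. x = GA \<or> x = GB \<or> x = GC" by (case_tac x) auto
  have "P (AWWord ws)"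
  proof (cases ws)
    case Nil then show ?thesis using assms by simp
  next
    case (Cons a r1) note c1 = this
    show ?thesis
    proof (cases r1)
      case Nil then show ?thesis using assms c1 ag[of a] by auto
    next
      case (Cons b r2) note c2 = this
      show ?thesis
      proof (cases r2)
        case Nil then show ?thesis using assms c1 c2 ag[of a] ag[of b] by auto
      next
        case (Cons c r3) note c3 = this
        show ?thesis
        proof (cases r3)
          case Nil then show ?thesis using assms c1 c2 c3 ag[of a] ag[of b] ag[of c] by auto
        next
          case (Cons d r) then show ?thesis using assms c1 c2 c3 by auto
        qed
      qed
    qed
  qed
  then show ?thesis using w by simp
qed


lemma lookup_smult[simp]: "Poly_Mapping.lookup (fa_smult c x) w = c * Poly_Mapping.lookup x w"
proof (induction x rule: pm_induct)
  case zero then show ?case by (simp add: fa_smult_def)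
next
  case (single v d) then show ?case
    by (simp add: fa_smult_def fa_const_def mult_single lookup_single when_def)
next
  case (add a b) then show ?case by (simp add: fa_smult_def distrib_left lookup_add)
qed

lemma smult_mult_left: "fa_smult c x * y = fa_smult c (x * y)"
  by (simp add: fa_smult_def mult.assoc)
lemma smult_mult_right: "x * fa_smult c y = fa_smult c (x * y)"
  by (simp add: fa_smult_def mult.assoc[symmetric] fa_const_central[of c x, symmetric])
lemma smult_add: "fa_smult c (x + y) = fa_smult c x + fa_smult c y"
  by (simp add: fa_smult_def distrib_left)
lemma smult_diff: "fa_smult c (x - y) = fa_smult c x - fa_smult c y"
  by (simp add: fa_smult_def right_diff_distrib)
lemma smult_smult: "fa_smult c (fa_smult d x) = fa_smult (c * d) x"
  by (simp add: fa_smult_def mult.assoc[symmetric] fa_const_mult)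

lemmas norm_simps = distrib_left distrib_right left_diff_distrib right_diff_distrib
  smult_mult_left smult_mult_right smult_add smult_diff smult_smult
  fa_gen_def mult_single plus_aw_word.simps

lemmas lk_simps = lookup_add lookup_minus lookup_single when_def

definition cenx :: "'a::field \<Rightarrow> 'a \<Rightarrow> 'a \<Rightarrow> 'a freealg \<Rightarrow> 'a freealg \<Rightarrow> 'a freealg \<Rightarrow> 'a freealg" where
  "cenx q u m x y z = x + fa_smult m (fa_smult q (y * z) - fa_smult u (z * y))"


lemma S1:
  fixes q u m k :: "'a::field"
  assumes "k = m * (q + u)"
  shows "cenx q u m fB fA (fC + fa_smult k (fA*fB - fB*fA))
       = cenx q u m fB fC fA + fa_smult k (fA * cenx q u m fC fA fB - cenx q u m fC fA fB * fA)"
  unfolding cenx_def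
  apply (simp only: norm_simps)
  apply (rule poly_mapping_eqI)
  subgoal for w
    apply (rule word_cases[where w=w])
    apply (simp_all add: lk_simps assms algebra_simps)
    done
  done

lemma S2:
  fixes q u m k :: "'a::field"
  assumes "k = m * (q + u)"
  shows "cenx q u m fA (fC + fa_smult k (fA*fB - fB*fA)) fB
       = cenx q u m fA fB fC + fa_smult k (cenx q u m fC fA fB * fB - fB * cenx q u m fC fA fB)"
  unfolding cenx_def
  apply (simp only: norm_simps)
  apply (rule poly_mapping_eqI)
  subgoal for w
    apply (rule word_cases[where w=w])
    apply (simp_all add: lk_simps assms algebra_simps)
    done
  done

lemma S3:
  fixes q u m k :: "'a::field"
  assumes "k = m * (q + u)"
  shows "cenx q u m (fC + fa_smult k (fA*fB - fB*fA)) fB fA = cenx q u m fC fA fB"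
  unfolding cenx_def
  apply (simp only: norm_simps)
  apply (rule poly_mapping_eqI)
  subgoal for w
    apply (rule word_cases[where w=w])
    apply (simp_all add: lk_simps assms algebra_simps)
    done
  done

lemma S4:
  fixes k :: "'a::field"
  shows "(fC + fa_smult k (fA*fB - fB*fA)) + fa_smult k (fB*fA - fA*fB) = fC"
  by (simp add: smult_diff)


definition rg :: "awgen \<Rightarrow> 'a::field freealg" where
  "rg l = (case l of GA \<Rightarrow> fB | GB \<Rightarrow> fC | GC \<Rightarrow> fA)"

definition Cp :: "'a::field \<Rightarrow> 'a freealg" where
  "Cp q = fC + fa_smult (1 / (q - 1 / q)) (fA * fB - fB * fA)"

definition sg :: "'a::field \<Rightarrow> awgen \<Rightarrow> 'a freealg" where
  "sg q l = (case l of GA \<Rightarrow> fB | GB \<Rightarrow> fA | GC \<Rightarrow> Cp q)"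

lemma rg_simps[simp]: "rg GA = fB" "rg GB = fC" "rg GC = fA" by (simp_all add: rg_def)
lemma sg_simps[simp]: "sg q GA = fB" "sg q GB = fA" "sg q GC = Cp q" by (simp_all add: sg_def)

lemma hom_fext: "is_hom (fext g)"
  by (simp add: is_hom_def fext_add fext_mult)

lemma fext_central: "fext g (aw_central q x y z) = aw_central q (fext g x) (fext g y) (fext g z)"
  by (simp add: aw_central_def fext_add fext_diff fext_smult fext_mult)

lemma aw_central_cenx: "aw_central q x y z = cenx q (1/q) (1/(q^2 - (1/q)^2)) x y z"
  by (simp add: aw_central_def cenx_def power_one_over)

lemma kfact:
  fixes q :: "'a::field"
  assumes q0: "q \<noteq> 0" and q4: "q ^ 4 \<noteq> 1"
  shows "1 / (q - 1/q) = 1 / (q^2 - (1/q)^2) * (q + 1/q)"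
proof -
  have a: "q - 1/q \<noteq> 0"
  proof
    assume "q - 1/q = 0"
    then have "q * q = 1" using q0 by (simp add: field_simps)
    then have "q^4 = 1" by (metis power2_eq_square power_mult numeral_Bit0 one_power2 mult_2_right)
    with q4 show False by simp
  qed
  have b: "q + 1/q \<noteq> 0"
  proof
    assume "q + 1/q = 0"
    then have "1 + q * q = 0" using q0 by (simp add: field_simps)
    then have "q * q = -1" by (metis add.commute eq_neg_iff_add_eq_0)
    then have "q^4 = 1"
      by (metis power2_eq_square power_mult numeral_Bit0 mult_2_right power2_minus one_power2)
    with q4 show False by simp
  qed
  have "q^2 - (1/q)^2 = (q - 1/q) * (q + 1/q)" by (simp add: power2_eq_square algebra_simps)
  then show ?thesis using a b by simp
qed

lemma rel_mem: "c \<in> {aw_central q fA fB fC, aw_central q fB fC fA, aw_central q fC fA fB}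
   \<Longrightarrow> c * y - y * c \<in> aw_rel q"
  unfolding aw_rel_def by blast

lemma rel_pert:
  assumes "d \<in> {aw_central q fA fB fC, aw_central q fB fC fA, aw_central q fC fA fB}"
    and "e \<in> aw_ideal q"
  shows "(d + e) * y - y * (d + e) \<in> aw_ideal q"
proof -
  have "(d + e) * y - y * (d + e) = (d * y - y * d) + (e * y - y * e)"
    by (simp add: algebra_simps)
  moreover have "d * y - y * d \<in> aw_ideal q" by (rule I_rel[OF rel_mem[OF assms(1)]])
  moreover have "e * y - y * e \<in> aw_ideal q" by (rule I_diff[OF I_rmul[OF assms(2)] I_lmul[OF assms(2)]])
  ultimately show ?thesis by (simp add: I_add)
qed

lemma good_comp:
  assumes f: "good q f" and g: "good q g"
  shows "good q (\<lambda>x. f (g x))"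
proof -
  have hf: "is_hom f" and hg: "is_hom g" using f g by (simp_all add: good_def)
  have "is_hom (\<lambda>x. f (g x))" using hf hg by (simp add: is_hom_def)
  moreover have "f (g r) \<in> aw_ideal q" if "r \<in> aw_rel q" for r
  proof -
    have "g r \<in> aw_ideal q" using g that by (simp add: good_def)
    then show ?thesis using respects_ideal[OF hf] f by (simp add: good_def)
  qed
  ultimately show ?thesis by (simp add: good_def)
qed

lemma rho3: "fext rg (fext rg (fext rg x)) = (x :: 'a::field freealg)"
proof -
  have "(\<lambda>l. fext rg (fext rg (rg l))) = (fa_gen :: awgen \<Rightarrow> 'a freealg)"
  proof
    fix l show "fext rg (fext rg (rg l)) = (fa_gen l :: 'a freealg)" by (cases l) simp_all
  qed
  then show ?thesis by (simp add: fext_comp fext_id)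
qed

lemma good_rho: "good q (fext rg)"
  unfolding good_def
proof (intro conjI ballI)
  show "is_hom (fext rg)" by (rule hom_fext)
  fix r assume "r \<in> aw_rel q"
  then obtain c y where r: "r = c * y - y * c"
    and c: "c \<in> {aw_central q fA fB fC, aw_central q fB fC fA, aw_central q fC fA fB}"
    unfolding aw_rel_def by blast
  have "fext rg c \<in> {aw_central q fA fB fC, aw_central q fB fC fA, aw_central q fC fA fB}"
    using c by (auto simp: fext_central)
  then show "fext rg r \<in> aw_ideal q"
    unfolding r by (simp add: fext_diff fext_mult I_rel rel_mem)
qed

context
  fixes q :: "'a::field"
  assumes q0: "q \<noteq> 0" and q4: "q ^ 4 \<noteq> 1"
begin

abbreviation "kk \<equiv> 1 / (q - 1/q)"
abbreviation "cA \<equiv> aw_central q fA fB fC"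
abbreviation "cB \<equiv> aw_central q fB fC fA"
abbreviation "cC \<equiv> aw_central q fC fA fB"

lemma sig_A: "fext (sg q) cA = cB + fa_smult kk (fA * cC - cC * fA)"
proof -
  have "fext (sg q) cA = aw_central q fB fA (Cp q)"
    by (simp add: fext_central)
  also have "\<dots> = cB + fa_smult kk (fA * cC - cC * fA)"
    unfolding aw_central_cenx Cp_def by (rule S1[OF kfact[OF q0 q4]])
  finally show ?thesis .
qed

lemma sig_B: "fext (sg q) cB = cA + fa_smult kk (cC * fB - fB * cC)"
proof -
  have "fext (sg q) cB = aw_central q fA (Cp q) fB"
    by (simp add: fext_central)
  also have "\<dots> = cA + fa_smult kk (cC * fB - fB * cC)"
    unfolding aw_central_cenx Cp_def by (rule S2[OF kfact[OF q0 q4]])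
  finally show ?thesis .
qed

lemma sig_C: "fext (sg q) cC = cC"
proof -
  have "fext (sg q) cC = aw_central q (Cp q) fB fA"
    by (simp add: fext_central)
  also have "\<dots> = cC"
    unfolding aw_central_cenx Cp_def by (rule S3[OF kfact[OF q0 q4]])
  finally show ?thesis .
qed

lemma eA: "fa_smult kk (fA * cC - cC * fA) \<in> aw_ideal q"
proof -
  have "cC * fA - fA * cC \<in> aw_ideal q" by (rule I_rel[OF rel_mem]) simp
  from I_smult[OF I_neg[OF this]] show ?thesis by simp
qed

lemma eB: "fa_smult kk (cC * fB - fB * cC) \<in> aw_ideal q"
  by (rule I_smult[OF I_rel[OF rel_mem]]) simp

lemma good_sig: "good q (fext (sg q))"
  unfolding good_def
proof (intro conjI ballI)
  show "is_hom (fext (sg q))" by (rule hom_fext)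
  fix r assume "r \<in> aw_rel q"
  then obtain c y where r: "r = c * y - y * c"
    and c: "c \<in> {cA, cB, cC}"
    unfolding aw_rel_def by blast
  have "\<exists>d e. fext (sg q) c = d + e \<and> d \<in> {cA, cB, cC} \<and> e \<in> aw_ideal q"
    using c sig_A sig_B sig_C eA eB I_zero by (metis add_0_right insert_iff singletonD)
  then obtain d e where de: "fext (sg q) c = d + e" "d \<in> {cA, cB, cC}" "e \<in> aw_ideal q" by blast
  show "fext (sg q) r \<in> aw_ideal q"
    unfolding r by (simp add: fext_diff fext_mult de(1) rel_pert[OF de(2,3)])
qed

lemma sigma2: "fext (sg q) (fext (sg q) x) = x"
proof -
  have "(\<lambda>l. fext (sg q) (sg q l)) = fa_gen"
  proof
    fix l show "fext (sg q) (sg q l) = fa_gen l"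
      by (cases l) (simp_all add: Cp_def fext_add fext_smult fext_diff fext_mult smult_diff)
  qed
  then show ?thesis by (simp add: fext_comp fext_id)
qed

end

theorem theorem3p1:
  fixes q :: "'a::field"
  assumes "q \<noteq> 0" and "q ^ 4 \<noteq> 1"
  shows "\<exists>\<rho> \<sigma>. aw_alg_aut q \<rho> \<and> aw_alg_aut q \<sigma> \<and>
    (\<forall>x\<in>carrier (UAW q). \<rho> (\<rho> (\<rho> x)) = x) \<and>
    (\<forall>x\<in>carrier (UAW q). \<sigma> (\<sigma> x) = x) \<and>
    \<rho> (aw_cls q fA) = aw_cls q fB \<and>
    \<rho> (aw_cls q fB) = aw_cls q fC \<and>
    \<rho> (aw_cls q fC) = aw_cls q fA \<and>
    \<rho> (aw_cls q (aw_alpha q)) = aw_cls q (aw_beta q) \<and>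
    \<rho> (aw_cls q (aw_beta q)) = aw_cls q (aw_gamma q) \<and>
    \<rho> (aw_cls q (aw_gamma q)) = aw_cls q (aw_alpha q) \<and>
    \<sigma> (aw_cls q fA) = aw_cls q fB \<and>
    \<sigma> (aw_cls q fB) = aw_cls q fA \<and>
    \<sigma> (aw_cls q fC) = aw_cls q (fC + fa_smult (1 / (q - 1 / q)) (fA * fB - fB * fA)) \<and>
    \<sigma> (aw_cls q (aw_alpha q)) = aw_cls q (aw_beta q) \<and>
    \<sigma> (aw_cls q (aw_beta q)) = aw_cls q (aw_alpha q) \<and>
    \<sigma> (aw_cls q (aw_gamma q)) = aw_cls q (aw_gamma q)"
proof -
  note q = assms
  define \<rho> where "\<rho> = indF q (fext rg)"
  define \<sigma> where "\<sigma> = indF q (fext (sg q))"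
  have gr: "good q (fext rg)" by (rule good_rho)
  have gs: "good q (fext (sg q))" by (rule good_sig[OF q])
  have r: "\<rho> (aw_cls q x) = aw_cls q (fext rg x)" for x
    unfolding \<rho>_def by (rule indF_cls[OF gr])
  have s: "\<sigma> (aw_cls q x) = aw_cls q (fext (sg q) x)" for x
    unfolding \<sigma>_def by (rule indF_cls[OF gs])
  have autr: "aw_alg_aut q \<rho>"
    unfolding \<rho>_def
    by (rule indF_aut[OF gr good_comp[OF gr gr]]) (simp_all add: rho3)
  have auts: "aw_alg_aut q \<sigma>"
    unfolding \<sigma>_def
    by (rule indF_aut[OF gs gs]) (simp_all add: sigma2[OF q])
  have r3: "\<forall>x\<in>carrier (UAW q). \<rho> (\<rho> (\<rho> x)) = x"
    by (auto simp: UAW_carrier r rho3)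
  have s2: "\<forall>x\<in>carrier (UAW q). \<sigma> (\<sigma> x) = x"
    by (auto simp: UAW_carrier s sigma2[OF q])
  have ra: "fext rg (aw_alpha q) = aw_beta q" "fext rg (aw_beta q) = aw_gamma q"
     "fext rg (aw_gamma q) = aw_alpha q"
    by (simp_all add: aw_alpha_def aw_beta_def aw_gamma_def fext_smult fext_central)
  have sgm: "fext (sg q) (aw_gamma q) = aw_gamma q"
    by (simp add: aw_gamma_def fext_smult sig_C[OF q])
  have sal: "aw_cls q (fext (sg q) (aw_alpha q)) = aw_cls q (aw_beta q)"
    unfolding cls_eq aw_alpha_def aw_beta_def fext_smult sig_A[OF q] smult_add
    using I_smult[OF eA[OF q]] by simp
  have sbe: "aw_cls q (fext (sg q) (aw_beta q)) = aw_cls q (aw_alpha q)"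
    unfolding cls_eq aw_alpha_def aw_beta_def fext_smult sig_B[OF q] smult_add
    using I_smult[OF eB[OF q]] by simp
  show ?thesis
    apply (rule exI[of _ \<rho>], rule exI[of _ \<sigma>])
    using autr auts r3 s2 ra sgm sal sbe by (simp add: r s Cp_def)
qed


end
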